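(* Let $v\in\Sigma^*$, let $u$ be a $v$-minimal word, $i\in\mathrm{supp}(u)$, and $r_i=\mathrm{Rnk}(\mathcal{I}_i)$. Then $|\mathcal{I}_i/\!\sim_i|\le D(2,r_i,n)+1$. In particular, for any $g\in\mathcal{I}_i$ there is a word $z$ with $|z|\le D(2,r_i,n)$ such that $g\theta_i(z)\sim_i 0_i$.
   Context: Let $\mathcal{A}=\langle Q,\Sigma,\delta\rangle$ be a synchronizing automaton with $n=|Q|$ states $q_1,\dots,q_n$; write $q\cdot u$ for the action of $u\in\Sigma^*$ (extended to subsets) and $\mathrm{rk}(u)=|Q\cdot u|$. Each word acts linearly on $\mathbb{C}Q$ by $q\mapsto q\cdot u$, preserving $w^\perp=\{x:\langle x,q_1+\dots+q_n\rangle=0\}$; let $\rho:\Sigma^*\to\mathbb{M}_{n-1}(\mathbb{C})$ be the induced representation and $\mathcal{R}$ the $\mathbb{C}$-algebra generated by $\rho(\Sigma^* )$. Write $\mathcal{R}/\mathrm{Rad}(\mathcal{R})\cong\prod_{i=1}^k\mathbb{M}_{n_i}(\mathbb{C})$ (Jacobson radical, Wedderburn–Artin) and let $\theta_i:\Sigma^*\to\mathbb{M}_{n_i}(\mathbb{C})$ be $\rho$ followed by the quotient map and the $i$-th projection; $0_i$ is the zero matrix. The monoid $\theta_i(\Sigma^* )$ has a unique $0$-minimal ideal $\mathcal{I}_i$; $\mathrm{Rnk}(\mathcal{I}_i)=\min\{\mathrm{rk}(x): x\in\Sigma^*,\ \theta_i(x)\in\mathcal{I}_i\setminus\{0_i\}\}$.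 The support of a word $z$ is $\mathrm{supp}(z)=\{i:\theta_i(z)\neq0_i\}$. For $v\in\Sigma^*$, a word $u\in\Sigma^*v\Sigma^*$ is $v$-minimal if $\mathrm{supp}(u)\neq\emptyset$ and there is no $z\in\Sigma^*v\Sigma^*$ with $\emptyset\neq\mathrm{supp}(z)\subsetneq\mathrm{supp}(u)$. For such $u$, $i\in\mathrm{supp}(u)$ and $g\in\mathcal{I}_i$, a word $w$ $u$-represents $g$ if $w\in\Sigma^*u\Sigma^*$, $\theta_i(w)=g$, and either $g=0_i$ or $\mathrm{rk}(w)$ is minimum among all words $w'\in\Sigma^*u\Sigma^*$ with $\theta_i(w')=g$. Define $\sigma_i$ on $\mathcal{I}_i$ by $g\,\sigma_i\,f$ iff $g=f$ or there exist words $w_1,w_2$ that $u$-represent $g$ and $f$ respectively with $|Q\cdot w_1\cap Q\cdot w_2|>1$; let $\sim_i$ be the transitive closure of $\sigma_i$ (an equivalence relation on $\mathcal{I}_i$). $D(2,r,n)$ denotes the maximum size of a family of $r$-element subsets of $[1,n]$ in which every $2$-element subset is contained in at most one member. *)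

theory Defs
  imports "Jordan_Normal_Form.Matrix"
begin

text \<open>States are 0,...,n-1 (q_1,...,q_n of the paper); the alphabet is a finite set
  of letters; the transition function is delta; words are lists over the alphabet.\<close>

definition is_DFA :: "nat \<Rightarrow> 'a set \<Rightarrow> (nat \<Rightarrow> 'a \<Rightarrow> nat) \<Rightarrow> bool" where
  "is_DFA n Alph delta \<longleftrightarrow> finite Alph \<and> (\<forall>q<n. \<forall>a\<in>Alph. delta q a < n)"

definition act :: "(nat \<Rightarrow> 'a \<Rightarrow> nat) \<Rightarrow> nat \<Rightarrow> 'a list \<Rightarrow> nat" where
  "act delta q w = foldl delta q w"

definition img :: "nat \<Rightarrow> (nat \<Rightarrow> 'a \<Rightarrow> nat) \<Rightarrow> 'a list \<Rightarrow> nat set" where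
  "img n delta w = (\<lambda>q. act delta q w) ` {..<n}"

definition rk :: "nat \<Rightarrow> (nat \<Rightarrow> 'a \<Rightarrow> nat) \<Rightarrow> 'a list \<Rightarrow> nat" where
  "rk n delta w = card (img n delta w)"

definition synchronizing :: "nat \<Rightarrow> 'a set \<Rightarrow> (nat \<Rightarrow> 'a \<Rightarrow> nat) \<Rightarrow> bool" where
  "synchronizing n Alph delta \<longleftrightarrow> (\<exists>w\<in>lists Alph. rk n delta w = 1)"

definition factor_words :: "'a set \<Rightarrow> 'a list \<Rightarrow> 'a list set" where
  "factor_words Alph v = {a @ v @ b | a b. a \<in> lists Alph \<and> b \<in> lists Alph}"

text \<open>Words act on row vectors of C^Q by q \<mapsto> q.u.  We use the basis
  b_j = q_j - q_{n-1} (j < n-1) of the invariant subspace w^perp; in this basis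
  b_j . u = b_{j.u} - b_{(n-1).u}, where b_{n-1} = 0.  Matrices act on row vectors
  from the right, so rho(uv) = rho(u) rho(v).\<close>

definition rho :: "nat \<Rightarrow> (nat \<Rightarrow> 'a \<Rightarrow> nat) \<Rightarrow> 'a list \<Rightarrow> complex mat" where
  "rho n delta w = mat (n - 1) (n - 1)
     (\<lambda>(j, c). (if act delta j w = c then 1 else 0) - (if act delta (n - 1) w = c then 1 else 0))"

inductive_set gen_alg :: "nat \<Rightarrow> complex mat set \<Rightarrow> complex mat set" for m S where
  gen: "A \<in> S \<Longrightarrow> A \<in> gen_alg m S"
| one: "1\<^sub>m m \<in> gen_alg m S"
| zero: "0\<^sub>m m m \<in> gen_alg m S"
| add: "A \<in> gen_alg m S \<Longrightarrow> B \<in> gen_alg m S \<Longrightarrow> A + B \<in> gen_alg m S"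
| smult: "A \<in> gen_alg m S \<Longrightarrow> c \<cdot>\<^sub>m A \<in> gen_alg m S"
| mult: "A \<in> gen_alg m S \<Longrightarrow> B \<in> gen_alg m S \<Longrightarrow> A * B \<in> gen_alg m S"

definition algR :: "nat \<Rightarrow> 'a set \<Rightarrow> (nat \<Rightarrow> 'a \<Rightarrow> nat) \<Rightarrow> complex mat set" where
  "algR n Alph delta = gen_alg (n - 1) (rho n delta ` lists Alph)"

definition left_ideal :: "nat \<Rightarrow> complex mat set \<Rightarrow> complex mat set \<Rightarrow> bool" where
  "left_ideal m R L \<longleftrightarrow> L \<subseteq> R \<and> 0\<^sub>m m m \<in> L \<and> (\<forall>x\<in>L. \<forall>y\<in>L. x + y \<in> L)
     \<and> (\<forall>x\<in>L. - x \<in> L) \<and> (\<forall>r\<in>R. \<forall>x\<in>L. r * x \<in> L)"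

definition maximal_left_ideal :: "nat \<Rightarrow> complex mat set \<Rightarrow> complex mat set \<Rightarrow> bool" where
  "maximal_left_ideal m R L \<longleftrightarrow> left_ideal m R L \<and> L \<noteq> R
     \<and> (\<forall>L'. left_ideal m R L' \<and> L \<subseteq> L' \<longrightarrow> L' = L \<or> L' = R)"

definition jacobson_radical :: "nat \<Rightarrow> complex mat set \<Rightarrow> complex mat set" where
  "jacobson_radical m R = R \<inter> \<Inter> {L. maximal_left_ideal m R L}"

text \<open>Phi is a surjective unital C-algebra homomorphism from R onto
  prod_{i<k} M_{ns i}(C) whose kernel is the Jacobson radical, i.e. it induces an
  isomorphism R/Rad(R) \<cong> prod_{i<k} M_{ns i}(C).  Phi x i is the i-th component.\<close>

definition WA_decomposition :: "nat \<Rightarrow> complex mat set \<Rightarrow> nat \<Rightarrow> (nat \<Rightarrow> nat)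
    \<Rightarrow> (complex mat \<Rightarrow> nat \<Rightarrow> complex mat) \<Rightarrow> bool" where
  "WA_decomposition m R k ns Phi \<longleftrightarrow>
     (\<forall>i<k. 0 < ns i)
   \<and> (\<forall>x\<in>R. \<forall>i<k. Phi x i \<in> carrier_mat (ns i) (ns i))
   \<and> (\<forall>x\<in>R. \<forall>y\<in>R. \<forall>i<k. Phi (x + y) i = Phi x i + Phi y i)
   \<and> (\<forall>x\<in>R. \<forall>c. \<forall>i<k. Phi (c \<cdot>\<^sub>m x) i = c \<cdot>\<^sub>m Phi x i)
   \<and> (\<forall>x\<in>R. \<forall>y\<in>R. \<forall>i<k. Phi (x * y) i = Phi x i * Phi y i)
   \<and> (\<forall>i<k. Phi (1\<^sub>m m) i = 1\<^sub>m (ns i))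
   \<and> (\<forall>A. (\<forall>i<k. A i \<in> carrier_mat (ns i) (ns i)) \<longrightarrow> (\<exists>x\<in>R. \<forall>i<k. Phi x i = A i))
   \<and> (\<forall>x\<in>R. (\<forall>i<k. Phi x i = 0\<^sub>m (ns i) (ns i)) \<longleftrightarrow> x \<in> jacobson_radical m R)"

definition theta :: "nat \<Rightarrow> (nat \<Rightarrow> 'a \<Rightarrow> nat) \<Rightarrow> (complex mat \<Rightarrow> nat \<Rightarrow> complex mat)
    \<Rightarrow> nat \<Rightarrow> 'a list \<Rightarrow> complex mat" where
  "theta n delta Phi i w = Phi (rho n delta w) i"

definition mon_ideal :: "complex mat set \<Rightarrow> complex mat set \<Rightarrow> bool" where
  "mon_ideal M I \<longleftrightarrow> I \<subseteq> M \<and> I \<noteq> {} \<and> (\<forall>s\<in>M. \<forall>x\<in>I. s * x \<in> I \<and> x * s \<in> I)"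

definition zero_minimal_ideal :: "complex mat set \<Rightarrow> complex mat \<Rightarrow> complex mat set \<Rightarrow> bool" where
  "zero_minimal_ideal M Z I \<longleftrightarrow> mon_ideal M I \<and> I \<noteq> {Z}
     \<and> (\<forall>J. mon_ideal M J \<and> J \<subseteq> I \<longrightarrow> J = {Z} \<or> J = I)"

definition Rnk :: "nat \<Rightarrow> 'a set \<Rightarrow> (nat \<Rightarrow> 'a \<Rightarrow> nat) \<Rightarrow> (nat \<Rightarrow> nat)
    \<Rightarrow> (complex mat \<Rightarrow> nat \<Rightarrow> complex mat) \<Rightarrow> nat \<Rightarrow> complex mat set \<Rightarrow> nat" where
  "Rnk n Alph delta ns Phi i I = Min {rk n delta x | x. x \<in> lists Alph
      \<and> theta n delta Phi i x \<in> I \<and> theta n delta Phi i x \<noteq> 0\<^sub>m (ns i) (ns i)}"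

definition supp :: "nat \<Rightarrow> (nat \<Rightarrow> 'a \<Rightarrow> nat) \<Rightarrow> nat \<Rightarrow> (nat \<Rightarrow> nat)
    \<Rightarrow> (complex mat \<Rightarrow> nat \<Rightarrow> complex mat) \<Rightarrow> 'a list \<Rightarrow> nat set" where
  "supp n delta k ns Phi z = {i. i < k \<and> theta n delta Phi i z \<noteq> 0\<^sub>m (ns i) (ns i)}"

definition v_minimal :: "nat \<Rightarrow> 'a set \<Rightarrow> (nat \<Rightarrow> 'a \<Rightarrow> nat) \<Rightarrow> nat \<Rightarrow> (nat \<Rightarrow> nat)
    \<Rightarrow> (complex mat \<Rightarrow> nat \<Rightarrow> complex mat) \<Rightarrow> 'a list \<Rightarrow> 'a list \<Rightarrow> bool" where
  "v_minimal n Alph delta k ns Phi v u \<longleftrightarrow>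
     u \<in> factor_words Alph v \<and> supp n delta k ns Phi u \<noteq> {}
   \<and> \<not> (\<exists>z\<in>factor_words Alph v. supp n delta k ns Phi z \<noteq> {}
          \<and> supp n delta k ns Phi z \<subset> supp n delta k ns Phi u)"

definition u_represents :: "nat \<Rightarrow> 'a set \<Rightarrow> (nat \<Rightarrow> 'a \<Rightarrow> nat) \<Rightarrow> (nat \<Rightarrow> nat)
    \<Rightarrow> (complex mat \<Rightarrow> nat \<Rightarrow> complex mat) \<Rightarrow> 'a list \<Rightarrow> nat \<Rightarrow> complex mat \<Rightarrow> 'a list \<Rightarrow> bool" where
  "u_represents n Alph delta ns Phi u i g w \<longleftrightarrow>
     w \<in> factor_words Alph u \<and> theta n delta Phi i w = g
   \<and> (g = 0\<^sub>m (ns i) (ns i)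
      \<or> (\<forall>w'\<in>factor_words Alph u. theta n delta Phi i w' = g \<longrightarrow> rk n delta w \<le> rk n delta w'))"

definition sigma_rel :: "nat \<Rightarrow> 'a set \<Rightarrow> (nat \<Rightarrow> 'a \<Rightarrow> nat) \<Rightarrow> (nat \<Rightarrow> nat)
    \<Rightarrow> (complex mat \<Rightarrow> nat \<Rightarrow> complex mat) \<Rightarrow> 'a list \<Rightarrow> nat \<Rightarrow> complex mat set
    \<Rightarrow> (complex mat \<times> complex mat) set" where
  "sigma_rel n Alph delta ns Phi u i I = {(g, f). g \<in> I \<and> f \<in> I \<and>
     (g = f \<or> (\<exists>w1 w2. u_represents n Alph delta ns Phi u i g w1
                     \<and> u_represents n Alph delta ns Phi u i f w2
                     \<and> card (img n delta w1 \<inter> img n delta w2) > 1))}"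

definition sim_rel :: "nat \<Rightarrow> 'a set \<Rightarrow> (nat \<Rightarrow> 'a \<Rightarrow> nat) \<Rightarrow> (nat \<Rightarrow> nat)
    \<Rightarrow> (complex mat \<Rightarrow> nat \<Rightarrow> complex mat) \<Rightarrow> 'a list \<Rightarrow> nat \<Rightarrow> complex mat set
    \<Rightarrow> (complex mat \<times> complex mat) set" where
  "sim_rel n Alph delta ns Phi u i I = (sigma_rel n Alph delta ns Phi u i I)\<^sup>+"

definition D2 :: "nat \<Rightarrow> nat \<Rightarrow> nat" where
  "D2 r n = Max {card F | F. F \<subseteq> {S. S \<subseteq> {1..n} \<and> card S = r}
      \<and> (\<forall>P. P \<subseteq> {1..n} \<and> card P = 2 \<longrightarrow> card {S\<in>F. P \<subseteq> S} \<le> 1)}"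

end

theory Submission
  imports Defs
begin



lemma act_append: "act delta q (w @ z) = act delta (act delta q w) z"
  by (simp add: act_def)

lemma act_Nil[simp]: "act delta q [] = q" by (simp add: act_def)

lemma act_lt: "is_DFA n Alph delta \<Longrightarrow> q < n \<Longrightarrow> w \<in> lists Alph \<Longrightarrow> act delta q w < n"
proof (induction w arbitrary: q)
  case Nil then show ?case by simp
next
  case (Cons a w)
  then show ?case by (simp add: act_def is_DFA_def)
qed

lemma img_append: "img n delta (w @ z) = (\<lambda>q. act delta q z) ` img n delta w"
  by (simp add: img_def act_append image_image)

lemma img_sub: "is_DFA n Alph delta \<Longrightarrow> w \<in> lists Alph \<Longrightarrow> img n delta w \<subseteq> {..<n}"
  using act_lt by (fastforce simp: img_def)

lemma finite_img[simp]: "finite (img n delta w)" by (simp add: img_def)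

lemma rk_le_n: "rk n delta w \<le> n"
  unfolding rk_def img_def by (metis card_image_le card_lessThan finite_lessThan)

lemma rk_append1: "rk n delta (w @ z) \<le> rk n delta w"
  unfolding rk_def img_append by (rule card_image_le) simp

lemma rk_append2: "is_DFA n Alph delta \<Longrightarrow> w \<in> lists Alph \<Longrightarrow> rk n delta (w @ z) \<le> rk n delta z"
  unfolding rk_def img_append
proof (rule card_mono)
  assume d: "is_DFA n Alph delta" and w: "w \<in> lists Alph"
  show "(\<lambda>q. act delta q z) ` img n delta w \<subseteq> img n delta z"
    using img_sub[OF d w] by (auto simp: img_def)
qed simp

lemma rho_carrier[simp]: "rho n delta w \<in> carrier_mat (n - 1) (n - 1)"
  by (simp add: rho_def)

lemma rho_entry: "j < n - 1 \<Longrightarrow> c < n - 1 \<Longrightarrow> rho n delta w $$ (j, c) =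
   (if act delta j w = c then 1 else 0) - (if act delta (n - 1) w = c then 1 else 0)"
  by (simp add: rho_def)

lemma rho_Nil: "rho n delta [] = 1\<^sub>m (n - 1)"
  by (rule eq_matI) (auto simp: rho_def)

lemma rho_append:
  assumes dfa: "is_DFA n Alph delta" and n: "n \<ge> 1" and a: "a \<in> lists Alph" and b: "b \<in> lists Alph"
  shows "rho n delta (a @ b) = rho n delta a * rho n delta b"
proof (rule eq_matI)
  fix j c assume j: "j < dim_row (rho n delta a * rho n delta b)" and c: "c < dim_col (rho n delta a * rho n delta b)"
  then have j: "j < n - 1" and c: "c < n - 1" by (auto simp: rho_def)
  define g :: "nat \<Rightarrow> complex" where "g l = (if act delta l b = c then 1 else 0) - (if act delta (n-1) b = c then 1 else 0)" for l
  have gl: "\<And>l. l < n - 1 \<Longrightarrow> rho n delta b $$ (l, c) = g l" using c by (simp add: rho_def g_def)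
  have key: "(\<Sum>l<n-1. (if p = l then 1 else 0) * rho n delta b $$ (l, c)) = g p" if p: "p < n" for p
  proof -
    have "(\<Sum>l<n-1. (if p = l then 1 else 0) * rho n delta b $$ (l, c)) = (\<Sum>l<n-1. if p = l then g l else 0)"
      by (rule sum.cong) (auto simp: gl)
    also have "\<dots> = (if p < n - 1 then g p else 0)" by (simp add: sum.delta)
    also have "\<dots> = g p" using p by (cases "p = n - 1") (auto simp: g_def)
    finally show ?thesis .
  qed
  have "(rho n delta a * rho n delta b) $$ (j, c) = (\<Sum>l<n-1. rho n delta a $$ (j, l) * rho n delta b $$ (l, c))"
    using j c by (simp add: rho_def scalar_prod_def lessThan_atLeast0)
  also have "\<dots> = (\<Sum>l<n-1. (if act delta j a = l then 1 else 0) * rho n delta b $$ (l, c)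
       - (if act delta (n-1) a = l then 1 else 0) * rho n delta b $$ (l, c))"
    by (rule sum.cong[OF refl]) (simp add: rho_entry[OF j] left_diff_distrib)
  also have "\<dots> = g (act delta j a) - g (act delta (n-1) a)"
    unfolding sum_subtractf using key act_lt[OF dfa _ a] j n by simp
  also have "\<dots> = rho n delta (a @ b) $$ (j, c)"
    using j c by (simp add: rho_def g_def act_append)
  finally show "rho n delta (a @ b) $$ (j, c) = (rho n delta a * rho n delta b) $$ (j, c)" by simp
qed (auto simp: rho_def)




definition munit :: "nat \<Rightarrow> nat \<Rightarrow> nat \<Rightarrow> complex mat" where
  "munit N a b = mat N N (\<lambda>(x, y). if x = a \<and> y = b then 1 else 0)"

lemma mult_entry: "A \<in> carrier_mat N N \<Longrightarrow> B \<in> carrier_mat N N \<Longrightarrow> x < N \<Longrightarrow> y < N \<Longrightarrow>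
  (A * B) $$ (x, y) = (\<Sum>l<N. A $$ (x, l) * B $$ (l, y))"
  by (auto simp: scalar_prod_def lessThan_atLeast0 intro!: sum.cong)

lemma mult_unit_right:
  assumes A: "A \<in> carrier_mat N N" and a: "a < N" and b: "b < N"
  shows "A * munit N a b = mat N N (\<lambda>(x, y). if y = b then A $$ (x, a) else 0)"
proof (rule eq_matI)
  fix x y assume "x < dim_row (mat N N (\<lambda>(x, y). if y = b then A $$ (x, a) else 0))"
    "y < dim_col (mat N N (\<lambda>(x, y). if y = b then A $$ (x, a) else 0))"
  then have x: "x < N" and y: "y < N" by auto
  have "(A * munit N a b) $$ (x, y) = (\<Sum>l<N. A $$ (x, l) * munit N a b $$ (l, y))"
    using A x y by (intro mult_entry) (auto simp: munit_def)
  also have "\<dots> = (\<Sum>l<N. if l = a then (if y = b then A $$ (x, a) else 0) else 0)"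
    by (rule sum.cong[OF refl]) (auto simp: munit_def y)
  also have "\<dots> = (if y = b then A $$ (x, a) else 0)" using a by (simp add: sum.delta)
  finally show "(A * munit N a b) $$ (x, y) = mat N N (\<lambda>(x, y). if y = b then A $$ (x, a) else 0) $$ (x, y)"
    using x y by simp
qed (use A in \<open>auto simp: munit_def\<close>)

lemma col_mult:
  assumes U: "U \<in> carrier_mat N N" and s: "s < N"
  shows "mat N N (\<lambda>(x, y). if y = s then c x else 0) * U = mat N N (\<lambda>(x, y). c x * U $$ (s, y))"
proof (rule eq_matI)
  fix x y assume "x < dim_row (mat N N (\<lambda>(x, y). c x * U $$ (s, y)))"
    "y < dim_col (mat N N (\<lambda>(x, y). c x * U $$ (s, y)))"
  then have x: "x < N" and y: "y < N" by auto
  have "(mat N N (\<lambda>(x, y). if y = s then c x else 0) * U) $$ (x, y)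
      = (\<Sum>l<N. mat N N (\<lambda>(x, y). if y = s then c x else 0) $$ (x, l) * U $$ (l, y))"
    using U x y by (intro mult_entry) auto
  also have "\<dots> = (\<Sum>l<N. if l = s then c x * U $$ (s, y) else 0)"
    by (rule sum.cong[OF refl]) (auto simp: x)
  also have "\<dots> = c x * U $$ (s, y)" using s by (simp add: sum.delta)
  finally show "(mat N N (\<lambda>(x, y). if y = s then c x else 0) * U) $$ (x, y) = mat N N (\<lambda>(x, y). c x * U $$ (s, y)) $$ (x, y)"
    using x y by simp
qed (use U in auto)

lemma nonzero_entry:
  assumes "A \<in> carrier_mat N N" "A \<noteq> 0\<^sub>m N N"
  shows "\<exists>p<N. \<exists>q<N. A $$ (p, q) \<noteq> 0"
proof (rule ccontr)
  assume "\<not> ?thesis"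
  then have "A = 0\<^sub>m N N" using assms(1) by (intro eq_matI) auto
  then show False using assms(2) by simp
qed

lemma unit_lemma:
  fixes h U :: "complex mat"
  assumes h: "h \<in> carrier_mat N N" and U: "U \<in> carrier_mat N N"
    and h0: "h \<noteq> 0\<^sub>m N N" and U0: "U \<noteq> 0\<^sub>m N N"
  shows "\<exists>X\<in>carrier_mat N N. \<exists>Y\<in>carrier_mat N N. h * X * U * Y * h \<noteq> 0\<^sub>m N N"
proof -
  obtain p q where p: "p < N" and q: "q < N" and hpq: "h $$ (p, q) \<noteq> 0"
    using nonzero_entry[OF h h0] by blast
  obtain s t where s: "s < N" and t: "t < N" and ust: "U $$ (s, t) \<noteq> 0"
    using nonzero_entry[OF U U0] by blast
  have m1: "h * munit N q s = mat N N (\<lambda>(x, y). if y = s then h $$ (x, q) else 0)"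
    by (rule mult_unit_right[OF h q s])
  have m2: "h * munit N q s * U = mat N N (\<lambda>(x, y). h $$ (x, q) * U $$ (s, y))"
    unfolding m1 by (rule col_mult[OF U s])
  have m3: "h * munit N q s * U * munit N t p = mat N N (\<lambda>(x, y). if y = p then h $$ (x, q) * U $$ (s, t) else 0)"
    unfolding m2 by (subst mult_unit_right[OF _ t p]) (auto simp: t intro!: eq_matI)
  have m4: "h * munit N q s * U * munit N t p * h = mat N N (\<lambda>(x, y). (h $$ (x, q) * U $$ (s, t)) * h $$ (p, y))"
    unfolding m3 by (rule col_mult[OF h p])
  have "(h * munit N q s * U * munit N t p * h) $$ (p, q) \<noteq> 0"
    unfolding m4 using p q hpq ust by simp
  then have "h * munit N q s * U * munit N t p * h \<noteq> 0\<^sub>m N N" using p q by auto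
  moreover have "munit N q s \<in> carrier_mat N N" "munit N t p \<in> carrier_mat N N" by (auto simp: munit_def)
  ultimately show ?thesis by blast
qed




locale thm10 =
  fixes n :: nat and Alph :: "'a set" and delta :: "nat \<Rightarrow> 'a \<Rightarrow> nat" and k i :: nat
    and ns :: "nat \<Rightarrow> nat" and Phi :: "complex mat \<Rightarrow> nat \<Rightarrow> complex mat"
    and v u :: "'a list" and I :: "complex mat set"
  assumes dfa: "is_DFA n Alph delta"
    and sync: "synchronizing n Alph delta"
    and wa: "WA_decomposition (n - 1) (algR n Alph delta) k ns Phi"
    and v: "v \<in> lists Alph"
    and umin: "v_minimal n Alph delta k ns Phi v u"
    and iS: "i \<in> supp n delta k ns Phi u"
    and I: "zero_minimal_ideal (theta n delta Phi i ` lists Alph) (0\<^sub>m (ns i) (ns i)) I"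
begin

abbreviation "th \<equiv> theta n delta Phi i"
abbreviation "N \<equiv> ns i"
abbreviation "Z \<equiv> 0\<^sub>m (ns i) (ns i)"
abbreviation "R \<equiv> algR n Alph delta"

lemma n1: "n \<ge> 1"
proof (rule ccontr)
  assume "\<not> n \<ge> 1" then have "n = 0" by simp
  then show False using sync by (auto simp: synchronizing_def rk_def img_def)
qed

lemma ik: "i < k" using iS by (simp add: supp_def)

lemma wa_carrier: "x \<in> R \<Longrightarrow> Phi x i \<in> carrier_mat N N"
  using wa ik by (simp add: WA_decomposition_def)
lemma wa_add: "x \<in> R \<Longrightarrow> y \<in> R \<Longrightarrow> Phi (x + y) i = Phi x i + Phi y i"
  using wa ik by (simp add: WA_decomposition_def)
lemma wa_smult: "x \<in> R \<Longrightarrow> Phi (c \<cdot>\<^sub>m x) i = c \<cdot>\<^sub>m Phi x i"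
  using wa ik by (simp add: WA_decomposition_def)
lemma wa_mult: "x \<in> R \<Longrightarrow> y \<in> R \<Longrightarrow> Phi (x * y) i = Phi x i * Phi y i"
  using wa ik by (simp add: WA_decomposition_def)
lemma wa_one: "Phi (1\<^sub>m (n - 1)) i = 1\<^sub>m N"
  using wa ik by (simp add: WA_decomposition_def)
lemma wa_surj: "X \<in> carrier_mat N N \<Longrightarrow> \<exists>x\<in>R. Phi x i = X"
proof -
  assume X: "X \<in> carrier_mat N N"
  define A where "A j = (if j = i then X else 0\<^sub>m (ns j) (ns j))" for j
  have "\<forall>j<k. A j \<in> carrier_mat (ns j) (ns j)" using X by (auto simp: A_def)
  then obtain x where "x \<in> R" "\<forall>j<k. Phi x j = A j"
    using wa by (auto simp: WA_decomposition_def)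
  then show ?thesis using ik by (intro bexI[of _ x]) (auto simp: A_def)
qed

lemma one_R: "1\<^sub>m (n - 1) \<in> R" by (simp add: algR_def gen_alg.one)
lemma rho_R: "w \<in> lists Alph \<Longrightarrow> rho n delta w \<in> R" by (simp add: algR_def gen_alg.gen)

lemma th_carrier: "w \<in> lists Alph \<Longrightarrow> th w \<in> carrier_mat N N"
  by (simp add: theta_def wa_carrier rho_R)

lemma th_append: "a \<in> lists Alph \<Longrightarrow> b \<in> lists Alph \<Longrightarrow> th (a @ b) = th a * th b"
  by (simp add: theta_def rho_append[OF dfa n1] wa_mult rho_R)

lemma th_Nil: "th [] = 1\<^sub>m N"
  unfolding theta_def rho_Nil by (rule wa_one)

lemma Phi_zero: "Phi (0\<^sub>m (n - 1) (n - 1)) i = Z"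
proof -
  have "0\<^sub>m (n - 1) (n - 1) = (0::complex) \<cdot>\<^sub>m 1\<^sub>m (n - 1)" by (rule eq_matI) auto
  then have "Phi (0\<^sub>m (n - 1) (n - 1)) i = 0 \<cdot>\<^sub>m 1\<^sub>m N" using wa_smult[OF one_R] wa_one by simp
  also have "\<dots> = Z" by (rule eq_matI) auto
  finally show ?thesis .
qed

lemma th_rk1: assumes "w \<in> lists Alph" "rk n delta w \<le> 1" shows "th w = Z"
proof -
  have ne: "img n delta w \<noteq> {}" using n1 by (simp add: img_def lessThan_empty_iff)
  then have "rk n delta w \<noteq> 0" by (simp add: rk_def)
  then have "rk n delta w = 1" using assms(2) by linarith
  then obtain c where c: "img n delta w = {c}" by (auto simp: rk_def card_Suc_eq)
  have eq: "act delta q w = c" if "q < n" for q using c that by (auto simp: img_def)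
  have "rho n delta w = 0\<^sub>m (n - 1) (n - 1)"
    by (rule eq_matI) (auto simp: rho_entry eq n1 rho_def)
  then show ?thesis by (simp add: theta_def Phi_zero[simplified])
qed

lemma span_aux:
  assumes x: "x \<in> gen_alg (n - 1) (rho n delta ` lists Alph)"
  shows "\<forall>P\<in>carrier_mat N N. \<forall>Q\<in>carrier_mat N N. (\<forall>w\<in>lists Alph. P * th w * Q = Z) \<longrightarrow> P * Phi x i * Q = Z"
  using x
proof (induction x rule: gen_alg.induct)
  case (gen A)
  then show ?case by (auto simp: theta_def)
next
  case one
  then show ?case using th_Nil by (metis lists.Nil wa_one)
next
  case zero
  then show ?case by (auto simp: Phi_zero[simplified])
next
  case (add A B)
  have AR: "A \<in> R" and BR: "B \<in> R" using add.hyps by (auto simp: algR_def)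
  show ?case
  proof (intro ballI impI)
    fix P Q assume P: "P \<in> carrier_mat N N" and Q: "Q \<in> carrier_mat N N" and h: "\<forall>w\<in>lists Alph. P * th w * Q = Z"
    have a: "P * Phi A i * Q = Z" and b: "P * Phi B i * Q = Z" using add.IH P Q h by auto
    have cA: "Phi A i \<in> carrier_mat N N" and cB: "Phi B i \<in> carrier_mat N N" using AR BR wa_carrier by auto
    have "P * Phi (A + B) i * Q = P * Phi A i * Q + P * Phi B i * Q"
      using cA cB P Q by (simp add: wa_add AR BR mult_add_distrib_mat add_mult_distrib_mat[of _ N N])
    then show "P * Phi (A + B) i * Q = Z" using a b by simp
  qed
next
  case (smult A c)
  have AR: "A \<in> R" using smult.hyps by (auto simp: algR_def)
  show ?case
  proof (intro ballI impI)
    fix P Q assume P: "P \<in> carrier_mat N N" and Q: "Q \<in> carrier_mat N N" and h: "\<forall>w\<in>lists Alph. P * th w * Q = Z"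
    have a: "P * Phi A i * Q = Z" using smult.IH P Q h by auto
    have cA: "Phi A i \<in> carrier_mat N N" using AR wa_carrier by auto
    have "P * Phi (c \<cdot>\<^sub>m A) i * Q = c \<cdot>\<^sub>m (P * Phi A i * Q)"
      using cA P Q by (simp add: wa_smult AR mult_smult_distrib[of _ N N] mult_smult_assoc_mat[of _ N N])
    then show "P * Phi (c \<cdot>\<^sub>m A) i * Q = Z" using a by simp
  qed
next
  case (mult A B)
  have AR: "A \<in> R" and BR: "B \<in> R" using mult.hyps by (auto simp: algR_def)
  show ?case
  proof (intro ballI impI)
    fix P Q assume P: "P \<in> carrier_mat N N" and Q: "Q \<in> carrier_mat N N" and h: "\<forall>w\<in>lists Alph. P * th w * Q = Z"
    have cA: "Phi A i \<in> carrier_mat N N" and cB: "Phi B i \<in> carrier_mat N N" using AR BR wa_carrier by auto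
    have h2: "P * Phi A i * (th w * Q) = Z" if w: "w \<in> lists Alph" for w
    proof -
      have "\<forall>w'\<in>lists Alph. P * th w' * (th w * Q) = Z"
      proof
        fix w' assume w': "w' \<in> lists Alph"
        have "P * th w' * (th w * Q) = P * th (w' @ w) * Q"
          using th_carrier[OF w] th_carrier[OF w'] P Q by (simp add: th_append w w' assoc_mult_mat[of _ N N _ N _ N])
        then show "P * th w' * (th w * Q) = Z" using h w w' by simp
      qed
      then show ?thesis using mult.IH(1) P Q th_carrier[OF w] by auto
    qed
    have "\<forall>w\<in>lists Alph. (P * Phi A i) * th w * Q = Z"
    proof
      fix w assume w: "w \<in> lists Alph"
      have "(P * Phi A i) * th w * Q = P * Phi A i * (th w * Q)"
        using cA P Q th_carrier[OF w] by (simp add: assoc_mult_mat[of _ N N _ N _ N])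
      then show "(P * Phi A i) * th w * Q = Z" using h2[OF w] by simp
    qed
    then have "(P * Phi A i) * Phi B i * Q = Z" using mult.IH(2) P cA Q by auto
    then show "P * Phi (A * B) i * Q = Z"
      using cA cB P Q by (simp add: wa_mult AR BR)
  qed
qed

lemma span:
  assumes P: "P \<in> carrier_mat N N" and Q: "Q \<in> carrier_mat N N"
    and h: "\<forall>w\<in>lists Alph. P * th w * Q = Z" and X: "X \<in> carrier_mat N N"
  shows "P * X * Q = Z"
proof -
  obtain x where "x \<in> R" "Phi x i = X" using wa_surj[OF X] by blast
  then show ?thesis using span_aux[of x] P Q h by (auto simp: algR_def)
qed

end



context thm10 begin

abbreviation "M \<equiv> th ` lists Alph"
abbreviation "r \<equiv> Rnk n Alph delta ns Phi i I"
abbreviation "FW \<equiv> factor_words Alph u"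

lemma I_mi: "mon_ideal M I" and I_nZ: "I \<noteq> {Z}"
  and I_min: "\<And>J. mon_ideal M J \<Longrightarrow> J \<subseteq> I \<Longrightarrow> J = {Z} \<or> J = I"
  using I unfolding zero_minimal_ideal_def by blast+

lemma I_sub: "I \<subseteq> M" and I_ne: "I \<noteq> {}"
  using I_mi unfolding mon_ideal_def by blast+

lemma I_mult: "s \<in> M \<Longrightarrow> x \<in> I \<Longrightarrow> s * x \<in> I \<and> x * s \<in> I"
  using I_mi unfolding mon_ideal_def by blast

lemma u_lists: "u \<in> lists Alph"
  using umin v by (auto simp: v_minimal_def factor_words_def)

lemma FW_lists: "w \<in> FW \<Longrightarrow> w \<in> lists Alph"
  using u_lists by (auto simp: factor_words_def)

lemma FW_append: "w \<in> FW \<Longrightarrow> z \<in> lists Alph \<Longrightarrow> w @ z \<in> FW"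
proof -
  assume w: "w \<in> FW" and z: "z \<in> lists Alph"
  then obtain a b where "w = a @ u @ b" "a \<in> lists Alph" "b \<in> lists Alph" by (auto simp: factor_words_def)
  then show ?thesis unfolding factor_words_def using z by (intro CollectI exI[of _ a] exI[of _ "b @ z"]) simp
qed

lemma thu_nz: "th u \<noteq> Z" using iS by (simp add: supp_def)

lemma I_carrier: "g \<in> I \<Longrightarrow> g \<in> carrier_mat N N"
  using I_sub th_carrier by auto

lemma reset_ex: "\<exists>z0\<in>lists Alph. rk n delta z0 = 1"
  using sync by (simp add: synchronizing_def)

lemma Z_I: "Z \<in> I"
proof -
  obtain g where g: "g \<in> I" using I_ne by blast
  obtain z0 where z0: "z0 \<in> lists Alph" "rk n delta z0 = 1" using reset_ex by blast
  have "th z0 = Z" using th_rk1 z0 by simp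
  have "th z0 \<in> M" using z0 by blast
  then have "g * Z \<in> I" using I_mult[OF _ g] \<open>th z0 = Z\<close> by auto
  then show ?thesis using I_carrier[OF g] by simp
qed

definition RS where "RS = {rk n delta x | x. x \<in> lists Alph \<and> th x \<in> I \<and> th x \<noteq> Z}"

lemma r_def': "r = Min RS" by (simp add: Rnk_def RS_def)

lemma RS_fin: "finite RS"
  by (rule finite_subset[of _ "{..n}"]) (auto simp: RS_def rk_le_n)

lemma RS_ne: "RS \<noteq> {}"
proof -
  obtain g where g: "g \<in> I" "g \<noteq> Z" using I_ne I_nZ by blast
  then obtain x where "x \<in> lists Alph" "th x = g" using I_sub by blast
  then show ?thesis using g by (auto simp: RS_def)
qed

lemma Rnk_le: "x \<in> lists Alph \<Longrightarrow> th x \<in> I \<Longrightarrow> th x \<noteq> Z \<Longrightarrow> r \<le> rk n delta x"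
  unfolding r_def' by (rule Min_le[OF RS_fin]) (auto simp: RS_def)

lemma Rnk_ex: "\<exists>x\<in>lists Alph. th x \<in> I \<and> th x \<noteq> Z \<and> rk n delta x = r"
  using Min_in[OF RS_fin RS_ne] unfolding r_def' by (auto simp: RS_def)

lemma r2: "r \<ge> 2"
proof -
  obtain x where x: "x \<in> lists Alph" "th x \<in> I" "th x \<noteq> Z" "rk n delta x = r" using Rnk_ex by blast
  have "\<not> rk n delta x \<le> 1" using th_rk1 x by blast
  then show ?thesis using x by simp
qed

lemma assoc5: fixes p q r s t :: "complex mat"
  assumes "p \<in> carrier_mat N N" "q \<in> carrier_mat N N" "r \<in> carrier_mat N N" "s \<in> carrier_mat N N" "t \<in> carrier_mat N N"
  shows "p * (q * (r * (s * t))) = p * q * r * s * t"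
proof -
  have c1: "p * q * r \<in> carrier_mat N N" "p * q \<in> carrier_mat N N" "s * t \<in> carrier_mat N N" "r * (s * t) \<in> carrier_mat N N"
    using assms by auto
  have "p * q * r * s * t = p * q * r * (s * t)" by (rule assoc_mult_mat[OF c1(1) assms(4,5)])
  also have "\<dots> = p * q * (r * (s * t))" by (rule assoc_mult_mat[OF c1(2) assms(3) c1(3)])
  also have "\<dots> = p * (q * (r * (s * t)))" by (rule assoc_mult_mat[OF assms(1,2) c1(4)])
  finally show ?thesis by simp
qed

lemma th5: assumes "x \<in> lists Alph" "a \<in> lists Alph" "b \<in> lists Alph"
  shows "th (x @ a @ u @ b @ x) = th x * th a * th u * th b * th x"
  using assms u_lists by (simp add: th_append assoc5 th_carrier)

lemma A_prime:
  assumes g: "g \<in> I" "g \<noteq> Z"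
  shows "\<exists>w\<in>FW. th w = g \<and> rk n delta w \<le> r"
proof -
  obtain x where x: "x \<in> lists Alph" "th x \<in> I" "th x \<noteq> Z" "rk n delta x = r" using Rnk_ex by blast
  define h where "h = th x"
  have hc: "h \<in> carrier_mat N N" using th_carrier x h_def by simp
  have uc: "th u \<in> carrier_mat N N" using th_carrier u_lists by simp
  define K where "K = {th (s @ x @ a @ u @ b @ x @ t) | s a b t. s \<in> lists Alph \<and> a \<in> lists Alph \<and> b \<in> lists Alph \<and> t \<in> lists Alph}"
  have K_I: "K \<subseteq> I"
  proof
    fix y assume "y \<in> K"
    then obtain s a b t where st: "s \<in> lists Alph" "a \<in> lists Alph" "b \<in> lists Alph" "t \<in> lists Alph"
      and y: "y = th (s @ x @ a @ u @ b @ x @ t)" by (auto simp: K_def)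
    have rl: "a @ u @ b @ x @ t \<in> lists Alph" using st x u_lists by simp
    have "th (x @ a @ u @ b @ x @ t) = th x * th (a @ u @ b @ x @ t)" using th_append x rl by blast
    then have i1: "th (x @ a @ u @ b @ x @ t) \<in> I" using I_mult[of "th (a @ u @ b @ x @ t)" "th x"] rl x by auto
    have "th (s @ x @ a @ u @ b @ x @ t) = th s * th (x @ a @ u @ b @ x @ t)" using th_append st x rl by simp
    then show "y \<in> I" using I_mult[OF _ i1, of "th s"] st y by auto
  qed
  have "th ([] @ x @ [] @ u @ [] @ x @ []) \<in> K" unfolding K_def using x
    by (intro CollectI exI[of _ "[]"]) simp
  then have K_ne: "K \<noteq> {}" by blast
  have K_cl: "sm * y \<in> K \<and> y * sm \<in> K" if sm: "sm \<in> M" and y: "y \<in> K" for sm y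
  proof -
    from sm obtain s' where s': "s' \<in> lists Alph" "sm = th s'" by blast
    obtain s a b t where st: "s \<in> lists Alph" "a \<in> lists Alph" "b \<in> lists Alph" "t \<in> lists Alph"
      and y: "y = th (s @ x @ a @ u @ b @ x @ t)" using y by (auto simp: K_def)
    have w: "s @ x @ a @ u @ b @ x @ t \<in> lists Alph" using st x u_lists by simp
    have e1: "sm * y = th ((s' @ s) @ x @ a @ u @ b @ x @ t)"
      using th_append[OF s'(1) w] s' y by simp
    have e2: "y * sm = th (s @ x @ a @ u @ b @ x @ (t @ s'))"
      using th_append[OF w s'(1)] s' y by simp
    have "sm * y \<in> K" unfolding K_def e1 using st s'
      by (intro CollectI exI[of _ "s' @ s"] exI[of _ a] exI[of _ b] exI[of _ t]) simp
    moreover have "y * sm \<in> K" unfolding K_def e2 using st s'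
      by (intro CollectI exI[of _ s] exI[of _ a] exI[of _ b] exI[of _ "t @ s'"]) simp
    ultimately show "sm * y \<in> K \<and> y * sm \<in> K" by blast
  qed
  have K_mi: "mon_ideal M K" unfolding mon_ideal_def using K_I I_sub K_ne K_cl by blast
  have "K \<noteq> {Z}"
  proof
    assume KZ: "K = {Z}"
    have zero: "h * th a * th u * th b * h = Z" if "a \<in> lists Alph" "b \<in> lists Alph" for a b
    proof -
      have "th ([] @ x @ a @ u @ b @ x @ []) \<in> K" unfolding K_def using that x
        by (intro CollectI exI[of _ "[]"] exI[of _ a] exI[of _ b]) simp
      then have "th (x @ a @ u @ b @ x) = Z" using KZ by simp
      then show ?thesis using th5[OF x(1) that] h_def by simp
    qed
    have step1: "h * X * (th u * th b * h) = Z" if X: "X \<in> carrier_mat N N" and b: "b \<in> lists Alph" for X b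
    proof (rule span[OF hc _ _ X])
      show "th u * th b * h \<in> carrier_mat N N" using uc th_carrier[OF b] hc by simp
      show "\<forall>w\<in>lists Alph. h * th w * (th u * th b * h) = Z"
      proof
        fix w assume w: "w \<in> lists Alph"
        have cw: "th w \<in> carrier_mat N N" and cb: "th b \<in> carrier_mat N N" using th_carrier w b by auto
        have e1: "h * th w * th u * th b * h = h * th w * th u * (th b * h)"
          by (rule assoc_mult_mat[OF mult_carrier_mat[OF mult_carrier_mat[OF hc cw] uc] cb hc])
        have e2: "h * th w * th u * (th b * h) = h * th w * (th u * (th b * h))"
          by (rule assoc_mult_mat[OF mult_carrier_mat[OF hc cw] uc mult_carrier_mat[OF cb hc]])
        have e3: "th u * (th b * h) = th u * th b * h"
          by (rule assoc_mult_mat[OF uc cb hc, symmetric])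
        show "h * th w * (th u * th b * h) = Z"
          unfolding e3[symmetric] e2[symmetric] e1[symmetric] by (rule zero[OF w b])
      qed
    qed
    have step2: "h * X * th u * Y * h = Z" if X: "X \<in> carrier_mat N N" and Y: "Y \<in> carrier_mat N N" for X Y
    proof (rule span[OF _ hc _ Y])
      show "h * X * th u \<in> carrier_mat N N" using uc X hc by simp
      show "\<forall>w\<in>lists Alph. h * X * th u * th w * h = Z"
      proof
        fix w assume w: "w \<in> lists Alph"
        have cw: "th w \<in> carrier_mat N N" using th_carrier w by auto
        have e1: "h * X * th u * th w * h = h * X * th u * (th w * h)"
          by (rule assoc_mult_mat[OF mult_carrier_mat[OF mult_carrier_mat[OF hc X] uc] cw hc])
        have e2: "h * X * th u * (th w * h) = h * X * (th u * (th w * h))"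
          by (rule assoc_mult_mat[OF mult_carrier_mat[OF hc X] uc mult_carrier_mat[OF cw hc]])
        have e3: "th u * (th w * h) = th u * th w * h"
          by (rule assoc_mult_mat[OF uc cw hc, symmetric])
        show "h * X * th u * th w * h = Z"
          unfolding e1 e2 e3 by (rule step1[OF X w])
      qed
    qed
    have h0: "h \<noteq> Z" using x(3) h_def by simp
    from unit_lemma[OF hc uc h0 thu_nz] obtain X Y where XY: "X \<in> carrier_mat N N" "Y \<in> carrier_mat N N"
      "h * X * th u * Y * h \<noteq> Z" by blast
    show False using step2[OF XY(1) XY(2)] XY(3) by simp
  qed
  then have "K = I" using I_min[OF K_mi K_I] by blast
  then obtain s a b t where st: "s \<in> lists Alph" "a \<in> lists Alph" "b \<in> lists Alph" "t \<in> lists Alph"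
      and gw: "g = th (s @ x @ a @ u @ b @ x @ t)" using g(1) by (auto simp: K_def)
  have fw: "s @ x @ a @ u @ b @ x @ t \<in> FW"
    unfolding factor_words_def using st x
    by (intro CollectI exI[of _ "s @ x @ a"] exI[of _ "b @ x @ t"]) simp
  have "rk n delta (s @ x @ a @ u @ b @ x @ t) \<le> rk n delta (x @ a @ u @ b @ x @ t)"
    using rk_append2[OF dfa st(1)] by simp
  also have "\<dots> \<le> rk n delta x" by (rule rk_append1)
  finally show ?thesis using fw gw x(4) by auto
qed

end



context thm10 begin

abbreviation "rep \<equiv> u_represents n Alph delta ns Phi u i"
abbreviation "sig \<equiv> sigma_rel n Alph delta ns Phi u i I"
abbreviation "sim \<equiv> sim_rel n Alph delta ns Phi u i I"

lemma rep_mem: "rep g w \<Longrightarrow> w \<in> FW \<and> th w = g"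
  by (simp add: u_represents_def)

lemma rep_nz_rk: assumes g: "g \<in> I" "g \<noteq> Z" and w: "rep g w" shows "rk n delta w = r"
proof -
  obtain w' where w': "w' \<in> FW" "th w' = g" "rk n delta w' \<le> r" using A_prime[OF g] by blast
  have "rk n delta w \<le> rk n delta w'" using w w' g(2) by (auto simp: u_represents_def)
  moreover have "r \<le> rk n delta w" using rep_mem[OF w] Rnk_le FW_lists g by blast
  ultimately show ?thesis using w' by linarith
qed

lemma rep_ex: assumes g: "g \<in> I" "g \<noteq> Z" shows "\<exists>w. rep g w"
proof -
  obtain w where w: "w \<in> FW" "th w = g" "rk n delta w \<le> r" using A_prime[OF g] by blast
  have "\<forall>w'\<in>FW. th w' = g \<longrightarrow> rk n delta w \<le> rk n delta w'"
  proof (intro ballI impI)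
    fix w' assume "w' \<in> FW" "th w' = g"
    then have "r \<le> rk n delta w'" using Rnk_le FW_lists g by blast
    then show "rk n delta w \<le> rk n delta w'" using w by linarith
  qed
  then show ?thesis using w by (auto simp: u_represents_def)
qed

lemma sig_sub: "sig \<subseteq> I \<times> I" by (auto simp: sigma_rel_def)
lemma sig_refl: "g \<in> I \<Longrightarrow> (g, g) \<in> sig" by (auto simp: sigma_rel_def)
lemma sig_sym: "sym sig"
  unfolding sym_def
proof (intro allI impI)
  fix x y assume "(x, y) \<in> sig"
  then have xy: "x \<in> I" "y \<in> I" "x = y \<or> (\<exists>w1 w2. rep x w1 \<and> rep y w2 \<and> card (img n delta w1 \<inter> img n delta w2) > 1)"
    by (auto simp: sigma_rel_def)
  from xy(3) have "y = x \<or> (\<exists>w1 w2. rep y w1 \<and> rep x w2 \<and> card (img n delta w1 \<inter> img n delta w2) > 1)"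
    by (metis Int_commute)
  then show "(y, x) \<in> sig" using xy by (simp add: sigma_rel_def)
qed

lemma sim_equiv: "equiv I sim"
proof -
  have s: "sim \<subseteq> I \<times> I" unfolding sim_rel_def by (rule trancl_subset_Sigma[OF sig_sub])
  have "refl_on I sim" unfolding refl_on_def using s sig_refl by (auto simp: sim_rel_def)
  moreover have "sym sim" unfolding sim_rel_def by (rule sym_trancl[OF sig_sym])
  moreover have "trans sim" unfolding sim_rel_def by (rule trans_trancl)
  ultimately show ?thesis using s by (simp add: equiv_def)
qed

lemma sig_sim: "(g, f) \<in> sig \<Longrightarrow> (g, f) \<in> sim" by (simp add: sim_rel_def)

lemma I_th: "g \<in> I \<Longrightarrow> z \<in> lists Alph \<Longrightarrow> g * th z \<in> I"
  using I_mult[of "th z" g] by blast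

lemma Z_th: "z \<in> lists Alph \<Longrightarrow> Z * th z = Z"
  by (rule left_mult_zero_mat[OF th_carrier])

lemma rep_step:
  assumes g: "g \<in> I" and w: "rep g w" and z: "z \<in> lists Alph" and nz: "g * th z \<noteq> Z"
  shows "inj_on (\<lambda>q. act delta q z) (img n delta w) \<and> rep (g * th z) (w @ z)"
proof -
  have gZ: "g \<noteq> Z" using nz Z_th[OF z] by auto
  have wf: "w \<in> FW" and tw: "th w = g" using rep_mem[OF w] by auto
  have wl: "w \<in> lists Alph" using FW_lists wf by blast
  have twz: "th (w @ z) = g * th z" using th_append[OF wl z] tw by simp
  have rw: "rk n delta w = r" using rep_nz_rk[OF g gZ w] .
  have "r \<le> rk n delta (w @ z)" using Rnk_le[of "w @ z"] twz wl z I_th[OF g z] nz by simp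
  moreover have "rk n delta (w @ z) \<le> rk n delta w" by (rule rk_append1)
  ultimately have eq: "rk n delta (w @ z) = rk n delta w" using rw by linarith
  have inj: "inj_on (\<lambda>q. act delta q z) (img n delta w)"
    using eq unfolding rk_def img_append by (intro eq_card_imp_inj_on) auto
  have "\<forall>w'\<in>FW. th w' = g * th z \<longrightarrow> rk n delta (w @ z) \<le> rk n delta w'"
  proof (intro ballI impI)
    fix w' assume "w' \<in> FW" "th w' = g * th z"
    then have "r \<le> rk n delta w'" using Rnk_le FW_lists I_th[OF g z] nz by metis
    then show "rk n delta (w @ z) \<le> rk n delta w'" using eq rw by linarith
  qed
  then show ?thesis using inj FW_append[OF wf z] twz by (simp add: u_represents_def)
qed

lemma rep_step0:
  assumes w: "rep g w" and z: "z \<in> lists Alph" and nz: "g * th z = Z"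
  shows "rep (g * th z) (w @ z)"
proof -
  have wf: "w \<in> FW" and tw: "th w = g" using rep_mem[OF w] by auto
  have wl: "w \<in> lists Alph" using FW_lists wf by blast
  have twz: "th (w @ z) = g * th z" using th_append[OF wl z] tw by simp
  show ?thesis using FW_append[OF wf z] twz nz by (simp add: u_represents_def)
qed

lemma two_elems: "finite A \<Longrightarrow> card A > 1 \<Longrightarrow> \<exists>p\<in>A. \<exists>q\<in>A. p \<noteq> q"
  using card_le_Suc0_iff_eq by (metis One_nat_def not_less)

lemma rc_sig:
  assumes gf: "(g, f) \<in> sig" and z: "z \<in> lists Alph"
  shows "(g * th z, f * th z) \<in> sig"
proof -
  have g: "g \<in> I" and f: "f \<in> I" using gf by (auto simp: sigma_rel_def)
  have g': "g * th z \<in> I" and f': "f * th z \<in> I" using I_th g f z by auto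
  show ?thesis
  proof (cases "g = f \<or> (g * th z = Z \<and> f * th z = Z)")
    case True
    then have "g * th z = f * th z" by auto
    then show ?thesis using sig_refl[OF g'] by simp
  next
    case False
    then obtain w1 w2 where w1: "rep g w1" and w2: "rep f w2"
      and c: "card (img n delta w1 \<inter> img n delta w2) > 1"
      using gf by (auto simp: sigma_rel_def)
    have nz: "g * th z \<noteq> Z \<or> f * th z \<noteq> Z" using False by auto
    have R1: "rep (g * th z) (w1 @ z)"
      using rep_step[OF g w1 z] rep_step0[OF w1 z] by (cases "g * th z = Z") auto
    have R2: "rep (f * th z) (w2 @ z)"
      using rep_step[OF f w2 z] rep_step0[OF w2 z] by (cases "f * th z = Z") auto
    have inj: "inj_on (\<lambda>q. act delta q z) (img n delta w1) \<or> inj_on (\<lambda>q. act delta q z) (img n delta w2)"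
      using nz rep_step[OF g w1 z] rep_step[OF f w2 z] by blast
    obtain p q where pq: "p \<in> img n delta w1 \<inter> img n delta w2" "q \<in> img n delta w1 \<inter> img n delta w2" "p \<noteq> q"
      using two_elems[OF _ c] by auto
    have d: "act delta p z \<noteq> act delta q z" using inj pq by (auto dest: inj_onD)
    have sub: "{act delta p z, act delta q z} \<subseteq> img n delta (w1 @ z) \<inter> img n delta (w2 @ z)"
      using pq by (auto simp: img_append)
    have "card {act delta p z, act delta q z} \<le> card (img n delta (w1 @ z) \<inter> img n delta (w2 @ z))"
      by (rule card_mono[OF _ sub]) simp
    then have "card (img n delta (w1 @ z) \<inter> img n delta (w2 @ z)) > 1" using d by simp
    then show ?thesis using R1 R2 g' f' unfolding sigma_rel_def by blast
  qed
qed

lemma rc_sim: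
  assumes gf: "(g, f) \<in> sim" and z: "z \<in> lists Alph"
  shows "(g * th z, f * th z) \<in> sim"
  using gf unfolding sim_rel_def
proof (induction rule: trancl_induct)
  case (base y)
  then show ?case using rc_sig[OF _ z] by blast
next
  case (step y w)
  then show ?case using rc_sig[OF _ z] by (meson trancl_into_trancl)
qed

end



context thm10 begin

definition pick :: "complex mat set \<Rightarrow> complex mat" where "pick C = (SOME g. g \<in> C)"
definition repw :: "complex mat \<Rightarrow> 'a list" where "repw g = (SOME w. rep g w)"
definition phi :: "complex mat set \<Rightarrow> nat set" where "phi C = Suc ` img n delta (repw (pick C))"
definition NZ :: "complex mat set set" where "NZ = I // sim - {sim `` {Z}}"

lemma NZ_props:
  assumes C: "C \<in> NZ"
  shows "pick C \<in> I \<and> pick C \<noteq> Z \<and> C = sim `` {pick C} \<and> rep (pick C) (repw (pick C))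
     \<and> rk n delta (repw (pick C)) = r"
proof -
  have CQ: "C \<in> I // sim" and CZ: "C \<noteq> sim `` {Z}" using C by (auto simp: NZ_def)
  obtain g0 where g0: "C = sim `` {g0}" "g0 \<in> I" using CQ by (rule quotientE)
  have "g0 \<in> C" using equiv_class_self[OF sim_equiv g0(2)] g0(1) by simp
  then have pC: "pick C \<in> C" unfolding pick_def by (rule someI)
  then have gp: "(g0, pick C) \<in> sim" using g0(1) by simp
  have pI: "pick C \<in> I" using gp sim_equiv unfolding equiv_def refl_on_def by blast
  have Ceq: "C = sim `` {pick C}" using equiv_class_eq[OF sim_equiv gp] g0(1) by simp
  have pZ: "pick C \<noteq> Z" by (metis Ceq CZ)
  have R: "rep (pick C) (repw (pick C))" unfolding repw_def using rep_ex[OF pI pZ] by (rule someI_ex)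
  have rkf: "rk n delta (repw (pick C)) = r" using rep_nz_rk[OF pI pZ R] .
  show ?thesis by (intro conjI pI pZ Ceq R rkf)
qed

lemma NZ_pI: "C \<in> NZ \<Longrightarrow> pick C \<in> I" using NZ_props by blast
lemma NZ_pZ: "C \<in> NZ \<Longrightarrow> pick C \<noteq> Z" using NZ_props by blast
lemma NZ_Ceq: "C \<in> NZ \<Longrightarrow> C = sim `` {pick C}" using NZ_props by blast
lemma NZ_R: "C \<in> NZ \<Longrightarrow> rep (pick C) (repw (pick C))" using NZ_props by blast
lemma NZ_rk: "C \<in> NZ \<Longrightarrow> rk n delta (repw (pick C)) = r" using NZ_props by blast

lemma phi_sub: "C \<in> NZ \<Longrightarrow> phi C \<subseteq> {1..n} \<and> card (phi C) = r"
proof -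
  assume C: "C \<in> NZ"
  have "repw (pick C) \<in> lists Alph" using NZ_R[OF C] rep_mem FW_lists by blast
  then have "img n delta (repw (pick C)) \<subseteq> {..<n}" using img_sub[OF dfa] by blast
  then have "phi C \<subseteq> {1..n}" unfolding phi_def by auto
  moreover have "card (phi C) = r" unfolding phi_def using NZ_rk[OF C] by (simp add: card_image rk_def)
  ultimately show ?thesis by blast
qed

lemma phi_int:
  assumes C1: "C1 \<in> NZ" and C2: "C2 \<in> NZ" and big: "card (phi C1 \<inter> phi C2) > 1"
  shows "C1 = C2"
proof -
  have "phi C1 \<inter> phi C2 = Suc ` (img n delta (repw (pick C1)) \<inter> img n delta (repw (pick C2)))"
    unfolding phi_def by (simp add: image_Int)
  then have "card (img n delta (repw (pick C1)) \<inter> img n delta (repw (pick C2))) > 1"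
    using big by (simp add: card_image)
  then have "(pick C1, pick C2) \<in> sig" using NZ_pI[OF C1] NZ_pI[OF C2] NZ_R[OF C1] NZ_R[OF C2]
    unfolding sigma_rel_def by blast
  then have "(pick C1, pick C2) \<in> sim" by (rule sig_sim)
  then have "sim `` {pick C1} = sim `` {pick C2}" by (rule equiv_class_eq[OF sim_equiv])
  then show ?thesis by (metis NZ_Ceq[OF C1] NZ_Ceq[OF C2])
qed

lemma phi_inj: "inj_on phi NZ"
proof (rule inj_onI)
  fix C1 C2 assume C1: "C1 \<in> NZ" and C2: "C2 \<in> NZ" and e: "phi C1 = phi C2"
  have "card (phi C1 \<inter> phi C2) = r" using e phi_sub[OF C1] by simp
  then show "C1 = C2" using phi_int[OF C1 C2] r2 by simp
qed

lemma D2_fin: "finite {card F | F. F \<subseteq> {S. S \<subseteq> {1..n} \<and> card S = r}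
      \<and> (\<forall>P. P \<subseteq> {1..n} \<and> card P = 2 \<longrightarrow> card {S\<in>F. P \<subseteq> S} \<le> 1)}"
proof (rule finite_subset[of _ "{..card (Pow {1..n})}"])
  show "{card F | F. F \<subseteq> {S. S \<subseteq> {1..n} \<and> card S = r}
      \<and> (\<forall>P. P \<subseteq> {1..n} \<and> card P = 2 \<longrightarrow> card {S\<in>F. P \<subseteq> S} \<le> 1)} \<subseteq> {..card (Pow {1..n})}"
  proof
    fix x assume "x \<in> {card F | F. F \<subseteq> {S. S \<subseteq> {1..n} \<and> card S = r}
      \<and> (\<forall>P. P \<subseteq> {1..n} \<and> card P = 2 \<longrightarrow> card {S\<in>F. P \<subseteq> S} \<le> 1)}"
    then obtain F where "x = card F" "F \<subseteq> Pow {1..n}" by auto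
    then show "x \<in> {..card (Pow {1..n})}" by (simp add: card_mono)
  qed
qed simp

lemma NZ_card: "finite NZ \<and> card NZ \<le> D2 r n"
proof -
  define F where "F = phi ` NZ"
  have Fsub: "F \<subseteq> {S. S \<subseteq> {1..n} \<and> card S = r}" using phi_sub by (auto simp: F_def)
  have Ffin: "finite F" by (rule finite_subset[of _ "Pow {1..n}"]) (use Fsub in auto)
  have Fpair: "\<forall>P. P \<subseteq> {1..n} \<and> card P = 2 \<longrightarrow> card {S\<in>F. P \<subseteq> S} \<le> 1"
  proof (intro allI impI)
    fix P assume P: "P \<subseteq> {1..n} \<and> card P = 2"
    have "\<forall>S1\<in>{S\<in>F. P \<subseteq> S}. \<forall>S2\<in>{S\<in>F. P \<subseteq> S}. S1 = S2"
    proof (intro ballI)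
      fix S1 S2 assume S1: "S1 \<in> {S\<in>F. P \<subseteq> S}" and S2: "S2 \<in> {S\<in>F. P \<subseteq> S}"
      then obtain C1 C2 where C: "C1 \<in> NZ" "C2 \<in> NZ" "S1 = phi C1" "S2 = phi C2" by (auto simp: F_def)
      have "P \<subseteq> S1 \<inter> S2" using S1 S2 by auto
      moreover have "finite (S1 \<inter> S2)" using S1 Fsub finite_subset[of _ "{1..n}"] by blast
      ultimately have "card P \<le> card (S1 \<inter> S2)" by (rule card_mono[rotated])
      then have "card (phi C1 \<inter> phi C2) > 1" using P C by simp
      then show "S1 = S2" using phi_int[OF C(1,2)] C by simp
    qed
    then show "card {S\<in>F. P \<subseteq> S} \<le> 1"
      using card_le_Suc0_iff_eq[of "{S\<in>F. P \<subseteq> S}"] Ffin by simp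
  qed
  have "card F \<le> D2 r n" unfolding D2_def
    by (rule Max_ge[OF D2_fin]) (use Fsub Fpair in blast)
  moreover have "card F = card NZ" unfolding F_def by (rule card_image[OF phi_inj])
  moreover have "finite NZ" using Ffin phi_inj unfolding F_def by (rule finite_imageD)
  ultimately show ?thesis by simp
qed

lemma part1: "card (I // sim) \<le> D2 r n + 1"
proof -
  have "I // sim \<subseteq> insert (sim `` {Z}) NZ" by (auto simp: NZ_def)
  then have "card (I // sim) \<le> card (insert (sim `` {Z}) NZ)"
    using NZ_card by (intro card_mono) auto
  also have "\<dots> \<le> card NZ + 1" using NZ_card by (simp add: card_insert_if)
  finally show ?thesis using NZ_card by simp
qed

lemma part2:
  assumes g: "g \<in> I"
  shows "\<exists>z\<in>lists Alph. length z \<le> D2 r n \<and> (g * th z, Z) \<in> sim"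
proof -
  define P where "P z \<longleftrightarrow> z \<in> lists Alph \<and> (g * th z, Z) \<in> sim" for z
  obtain z0 where z0: "z0 \<in> lists Alph" "rk n delta z0 = 1" using reset_ex by blast
  have "g * th z0 = Z" using th_rk1[OF z0(1)] z0(2) I_carrier[OF g] by simp
  then have "P z0" unfolding P_def using z0 sig_sim[OF sig_refl[OF Z_I]] by simp
  then obtain z where Pz: "P z" and minz: "\<And>y. P y \<Longrightarrow> length z \<le> length y"
    using ex_has_least_nat[of P z0 length] by blast
  have zl: "z \<in> lists Alph" and zs: "(g * th z, Z) \<in> sim" using Pz by (auto simp: P_def)
  define L where "L = length z"
  define cl where "cl j = sim `` {g * th (take j z)}" for j
  have tl: "take j z \<in> lists Alph" for j using zl by (meson in_lists_conv_set in_set_takeD)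
  have dl: "drop j z \<in> lists Alph" for j using zl by (meson in_lists_conv_set in_set_dropD)
  have xI: "g * th (take j z) \<in> I" for j using I_th[OF g tl] .
  have clNZ: "cl j \<in> NZ" if j: "j < L" for j
  proof -
    have "cl j \<in> I // sim" unfolding cl_def using xI by (rule quotientI)
    moreover have "cl j \<noteq> sim `` {Z}"
    proof
      assume "cl j = sim `` {Z}"
      then have "(g * th (take j z), Z) \<in> sim" unfolding cl_def using eq_equiv_class[OF _ sim_equiv Z_I] by blast
      then have "P (take j z)" using tl by (simp add: P_def)
      then have "length z \<le> length (take j z)" by (rule minz)
      then show False using j L_def by simp
    qed
    ultimately show ?thesis by (simp add: NZ_def)
  qed
  have noeq: "cl j \<noteq> cl k" if jk: "j < k" "k < L" for j k
  proof
    assume e: "cl j = cl k"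
    have "(g * th (take j z), g * th (take k z)) \<in> sim"
      using e unfolding cl_def using eq_equiv_class[OF _ sim_equiv xI] by blast
    then have s1: "(g * th (take j z) * th (drop k z), g * th (take k z) * th (drop k z)) \<in> sim"
      by (rule rc_sim[OF _ dl])
    have e2: "g * th (take k z) * th (drop k z) = g * th z"
    proof -
      have "g * th (take k z) * th (drop k z) = g * (th (take k z) * th (drop k z))"
        using I_carrier[OF g] th_carrier[OF tl] th_carrier[OF dl] by (rule assoc_mult_mat)
      also have "\<dots> = g * th (take k z @ drop k z)" using th_append[OF tl[of k] dl[of k]] by simp
      finally show ?thesis by simp
    qed
    have e1: "g * th (take j z) * th (drop k z) = g * th (take j z @ drop k z)"
    proof -
      have "g * th (take j z) * th (drop k z) = g * (th (take j z) * th (drop k z))"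
        using I_carrier[OF g] th_carrier[OF tl] th_carrier[OF dl] by (rule assoc_mult_mat)
      also have "\<dots> = g * th (take j z @ drop k z)" using th_append[OF tl[of j] dl[of k]] by simp
      finally show ?thesis .
    qed
    have "(g * th (take j z @ drop k z), Z) \<in> sim"
      using s1 e1 e2 zs sim_equiv by (metis equiv_def trans_def)
    moreover have "take j z @ drop k z \<in> lists Alph" using tl dl by simp
    ultimately have "P (take j z @ drop k z)" by (simp add: P_def)
    then have "length z \<le> length (take j z @ drop k z)" by (rule minz)
    then show False using jk L_def by simp
  qed
  have inj: "inj_on cl {..<L}"
  proof (rule inj_onI)
    fix j k assume "j \<in> {..<L}" "k \<in> {..<L}" "cl j = cl k"
    then show "j = k" using noeq by (metis lessThan_iff linorder_neqE_nat)
  qed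
  have "L = card (cl ` {..<L})" using card_image[OF inj] by simp
  also have "\<dots> \<le> card NZ" using NZ_card clNZ by (intro card_mono) auto
  also have "\<dots> \<le> D2 r n" using NZ_card by simp
  finally show ?thesis using zl zs L_def by blast
qed

end


theorem mainTheorem10:
  fixes Alph :: "'a set" and delta :: "nat \<Rightarrow> 'a \<Rightarrow> nat" and n k i :: nat
    and ns :: "nat \<Rightarrow> nat" and Phi :: "complex mat \<Rightarrow> nat \<Rightarrow> complex mat"
    and v u :: "'a list" and I :: "complex mat set"
  assumes dfa: "is_DFA n Alph delta"
    and sync: "synchronizing n Alph delta"
    and wa: "WA_decomposition (n - 1) (algR n Alph delta) k ns Phi"
    and v: "v \<in> lists Alph"
    and umin: "v_minimal n Alph delta k ns Phi v u"
    and i: "i \<in> supp n delta k ns Phi u"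
    and I: "zero_minimal_ideal (theta n delta Phi i ` lists Alph) (0\<^sub>m (ns i) (ns i)) I"
  shows "card (I // sim_rel n Alph delta ns Phi u i I)
           \<le> D2 (Rnk n Alph delta ns Phi i I) n + 1
       \<and> (\<forall>g\<in>I. \<exists>z\<in>lists Alph. length z \<le> D2 (Rnk n Alph delta ns Phi i I) n
              \<and> (g * theta n delta Phi i z, 0\<^sub>m (ns i) (ns i)) \<in> sim_rel n Alph delta ns Phi u i I)"
proof -
  interpret thm10 n Alph delta k i ns Phi v u I
    using dfa sync wa v umin i I by unfold_locales
  show ?thesis using part1 part2 by blast
qed

end
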